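(* Let $P=\forall x_1,\dots,x_n\,\exists y_1(D_1),\dots,y_k(D_k)$ be a prefix, let $G_{\mathrm{syn}}$ be an admissible group w.r.t. $P$, and let $G_{\mathrm{sem}}$ be its associated group. Let $\sigma\in\mathcal A(X)$, $f\in G_{\mathrm{sem}}$, $s\in\mathcal S(P)$ and $i\in\{1,\dots,k\}$ be such that (1) for all $j\in\{1,\dots,k\}$ with $j<i$ or $D_i\not\subseteq D_j$, we have $[y_j]_{\tau_s}=[y_j]_{\tau_{f(s)}}$ for all $\tau\in\mathcal A(X)$ with $\tau|_{D_i}=\sigma|_{D_i}$; (2) for all $g\in G_{\mathrm{syn}}$ and all $\tau\in\mathcal A(X)$, if $\tau|_{D_i}=\sigma|_{D_i}$ then $g(\tau)|_{D_i}=\tau|_{D_i}$. Then there exists an interpretation $s'\in\mathcal S(P)$ such that for every $j\in\{1,\dots,k\}$ and every $\tau\in\mathcal A(X)$: $[y_j]_{\tau_{s'}}=[y_j]_{\tau_s}$ if $j<i$, or if $j\ge i$ and $\tau|_{D_i}\neq\sigma|_{D_i}$; and $[y_j]_{\tau_{s'}}=[y_j]_{\tau_{f(s)}}$ if $j\ge i$ and $\tau|_{D_i}=\sigma|_{D_i}$. Furthermore, there exists $h\in G_{\mathrm{sem}}$ with $h(s)=s'$.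
   Context: $X=\{x_1,\dots,x_n\}$, $Y=\{y_1,\dots,y_k\}$ are finite disjoint sets of propositional variables; $\operatorname{BF}(V)$ the propositional formulas over $V\subseteq X\cup Y$; $\mathcal A(V)$ the assignments $V\to\{\top,\bot\}$; $[\phi]_\sigma$ the truth value; $D_j\subseteq X$. For $\rho\in\mathcal A(X)$ and $D\subseteq X$, $\rho|_D$ is the restriction of $\rho$ to $D$. An interpretation is $s=(s_1,\dots,s_k)$ with $s_j:\{\top,\bot\}^{|D_j|}\to\{\top,\bot\}$; $\mathcal S(P)$ the set of interpretations. For $\tau\in\mathcal A(X)$, $\tau_s\in\mathcal A(X\cup Y)$ equals $\tau$ on $X$ and $\tau_s(y_j)=s_j$ evaluated at $\tau$'s values on $D_j$. For $g:\operatorname{BF}(V)\to\operatorname{BF}(V)$ and $\rho\in\mathcal A(V)$, $g(\rho)(v)=[g(v)]_\rho$; $g$ preserves propositional satisfiability if $[g(\phi)]_\rho=[\phi]_{g(\rho)}$ always. A formula in $\operatorname{BF}(Y)$ depends on $x_i$ if it contains some $y_j$ with $x_i\in D_j$. A bijection $g$ of $\operatorname{BF}(X\cup Y)$ is admissible w.r.t. $P$ if it preserves propositional satisfiability, $g(x_i)\in\operatorname{BF}(X)$, $g(y_j)\in\operatorname{BF}(Y)$, and if $g(y_j)$ depends on $x_i$ then $g^{-1}(x_i)\in\operatorname{BF}(D_j)$. An admissible group is a subgroup of all admissible functions. For admissible $g$ and $\tau\in\mathcal A(X)$, $g(\tau)\in\mathcal A(X)$ is $g(\tau)(x)=[g(x)]_\tau$.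 The associated group of $G_{\mathrm{syn}}$ is the set of all bijections $f:\mathcal S(P)\to\mathcal S(P)$ such that for every $s\in\mathcal S(P)$ and $\tau\in\mathcal A(X)$ there exists $g\in G_{\mathrm{syn}}$ with $g(\tau)_{f(s)}=g(\tau_s)$. *)

theory Defs
  imports "HOL-Algebra.Bij"
begin

(* Variables: XV i is x_i (1 <= i <= n), YV j is y_j (1 <= j <= k). *)
datatype var = XV nat | YV nat

datatype form = Const bool | Var var | Neg form | Conj form form | Disj form form

primrec vars :: "form \<Rightarrow> var set" where
  "vars (Const b) = {}"
| "vars (Var v) = {v}"
| "vars (Neg p) = vars p"
| "vars (Conj p q) = vars p \<union> vars q"
| "vars (Disj p q) = vars p \<union> vars q"

primrec eval :: "form \<Rightarrow> (var \<Rightarrow> bool) \<Rightarrow> bool" where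
  "eval (Const b) \<rho> = b"
| "eval (Var v) \<rho> = \<rho> v"
| "eval (Neg p) \<rho> = (\<not> eval p \<rho>)"
| "eval (Conj p q) \<rho> = (eval p \<rho> \<and> eval q \<rho>)"
| "eval (Disj p q) \<rho> = (eval p \<rho> \<or> eval q \<rho>)"

definition BF :: "var set \<Rightarrow> form set" where
  "BF V = {\<phi>. vars \<phi> \<subseteq> V}"

definition Xs :: "nat \<Rightarrow> var set" where "Xs n = XV ` {1..n}"
definition Ys :: "nat \<Rightarrow> var set" where "Ys k = YV ` {1..k}"
definition Vs :: "nat \<Rightarrow> nat \<Rightarrow> var set" where "Vs n k = Xs n \<union> Ys k"

(* A(V): assignments V -> bool, represented canonically (False outside V) *)
definition assignV :: "var set \<Rightarrow> (var \<Rightarrow> bool) set" where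
  "assignV V = {\<rho>. \<forall>v. v \<notin> V \<longrightarrow> \<rho> v = False}"

(* A(X): assignments to x_1..x_n, as functions on indices, False outside {1..n} *)
definition assignX :: "nat \<Rightarrow> (nat \<Rightarrow> bool) set" where
  "assignX n = {\<tau>. \<forall>i. i \<notin> {1..n} \<longrightarrow> \<tau> i = False}"

definition agree :: "nat set \<Rightarrow> (nat \<Rightarrow> bool) \<Rightarrow> (nat \<Rightarrow> bool) \<Rightarrow> bool" where
  "agree D \<tau> \<sigma> \<longleftrightarrow> (\<forall>x\<in>D. \<tau> x = \<sigma> x)"

(* prefix  forall x_1..x_n exists y_1(D_1)..y_k(D_k): D_j are index sets of x-variables *)
definition prefix :: "nat \<Rightarrow> nat \<Rightarrow> (nat \<Rightarrow> nat set) \<Rightarrow> bool" where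
  "prefix n k D \<longleftrightarrow> (\<forall>j\<in>{1..k}. D j \<subseteq> {1..n})"

(* S(P): s j is a Boolean function of the values of the variables in D j
   (represented as a function of the whole X-assignment depending only on D j);
   canonically constant False for indices outside {1..k}. *)
definition interps :: "nat \<Rightarrow> (nat \<Rightarrow> nat set) \<Rightarrow> (nat \<Rightarrow> (nat \<Rightarrow> bool) \<Rightarrow> bool) set" where
  "interps k D = {s. \<forall>j. (j \<in> {1..k} \<longrightarrow> (\<forall>a b. agree (D j) a b \<longrightarrow> s j a = s j b))
                        \<and> (j \<notin> {1..k} \<longrightarrow> s j = (\<lambda>_. False))}"

(* tau_s in A(X \<union> Y) *)
definition ext :: "nat \<Rightarrow> (nat \<Rightarrow> (nat \<Rightarrow> bool) \<Rightarrow> bool) \<Rightarrow> (nat \<Rightarrow> bool) \<Rightarrow> var \<Rightarrow> bool" where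
  "ext k s \<tau> = (\<lambda>v. case v of XV i \<Rightarrow> \<tau> i | YV j \<Rightarrow> (if j \<in> {1..k} then s j \<tau> else False))"

(* tau in A(X) viewed as an assignment on var (y's False); only used on BF(X) *)
definition xasg :: "(nat \<Rightarrow> bool) \<Rightarrow> var \<Rightarrow> bool" where
  "xasg \<tau> = (\<lambda>v. case v of XV i \<Rightarrow> \<tau> i | YV _ \<Rightarrow> False)"

definition act_asg :: "var set \<Rightarrow> (form \<Rightarrow> form) \<Rightarrow> (var \<Rightarrow> bool) \<Rightarrow> var \<Rightarrow> bool" where
  "act_asg V g \<rho> = (\<lambda>v. if v \<in> V then eval (g (Var v)) \<rho> else False)"

definition act_asgX :: "nat \<Rightarrow> (form \<Rightarrow> form) \<Rightarrow> (nat \<Rightarrow> bool) \<Rightarrow> nat \<Rightarrow> bool" where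
  "act_asgX n g \<tau> = (\<lambda>i. if i \<in> {1..n} then eval (g (Var (XV i))) (xasg \<tau>) else False)"

definition depends :: "(nat \<Rightarrow> nat set) \<Rightarrow> form \<Rightarrow> nat \<Rightarrow> bool" where
  "depends D \<phi> i \<longleftrightarrow> (\<exists>l. YV l \<in> vars \<phi> \<and> i \<in> D l)"

definition admissible :: "nat \<Rightarrow> nat \<Rightarrow> (nat \<Rightarrow> nat set) \<Rightarrow> (form \<Rightarrow> form) \<Rightarrow> bool" where
  "admissible n k D g \<longleftrightarrow>
     bij_betw g (BF (Vs n k)) (BF (Vs n k))
   \<and> (\<forall>\<phi>\<in>BF (Vs n k). \<forall>\<rho>\<in>assignV (Vs n k). eval (g \<phi>) \<rho> = eval \<phi> (act_asg (Vs n k) g \<rho>))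
   \<and> (\<forall>i\<in>{1..n}. g (Var (XV i)) \<in> BF (Xs n))
   \<and> (\<forall>j\<in>{1..k}. g (Var (YV j)) \<in> BF (Ys k))
   \<and> (\<forall>j\<in>{1..k}. \<forall>i\<in>{1..n}. depends D (g (Var (YV j))) i \<longrightarrow>
          inv_into (BF (Vs n k)) g (Var (XV i)) \<in> BF (XV ` D j))"

definition admissible_group :: "nat \<Rightarrow> nat \<Rightarrow> (nat \<Rightarrow> nat set) \<Rightarrow> (form \<Rightarrow> form) set \<Rightarrow> bool" where
  "admissible_group n k D G \<longleftrightarrow>
     subgroup G (BijGroup (BF (Vs n k))) \<and> (\<forall>g\<in>G. admissible n k D g)"

definition assoc_group :: "nat \<Rightarrow> nat \<Rightarrow> (nat \<Rightarrow> nat set) \<Rightarrow> (form \<Rightarrow> form) set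
     \<Rightarrow> ((nat \<Rightarrow> (nat \<Rightarrow> bool) \<Rightarrow> bool) \<Rightarrow> (nat \<Rightarrow> (nat \<Rightarrow> bool) \<Rightarrow> bool)) set" where
  "assoc_group n k D G = {f. f \<in> Bij (interps k D) \<and>
     (\<forall>s\<in>interps k D. \<forall>\<tau>\<in>assignX n. \<exists>g\<in>G.
        ext k (f s) (act_asgX n g \<tau>) = act_asg (Vs n k) g (ext k s \<tau>))}"

end

theory Submission
  imports Defs
begin

lemma eval_cong: "(\<And>v. v \<in> vars \<phi> \<Longrightarrow> \<rho> v = \<rho>' v) \<Longrightarrow> eval \<phi> \<rho> = eval \<phi> \<rho>'"
  by (induction \<phi>) auto

lemma ext_in_assignV:
  assumes "\<tau> \<in> assignX n" shows "ext k t \<tau> \<in> assignV (Vs n k)"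
  using assms unfolding assignV_def assignX_def ext_def Vs_def Xs_def Ys_def
  by (fastforce split: var.splits simp: image_iff)

lemma xasg_in_assignV:
  assumes "\<tau> \<in> assignX n" shows "xasg \<tau> \<in> assignV (Vs n k)"
  using assms unfolding assignV_def assignX_def xasg_def Vs_def Xs_def Ys_def
  by (fastforce split: var.splits simp: image_iff)

lemma act_asgX_in: "act_asgX n g \<tau> \<in> assignX n"
  unfolding act_asgX_def assignX_def by auto

lemma act_asg_in: "act_asg V g \<rho> \<in> assignV V"
  unfolding act_asg_def assignV_def by auto

lemma L1:
  assumes "admissible n k D g" "\<tau> \<in> assignX n"
  shows "act_asgX n g \<tau> = (\<lambda>i. act_asg (Vs n k) g (ext k t \<tau>) (XV i))"
proof
  fix i
  show "act_asgX n g \<tau> i = act_asg (Vs n k) g (ext k t \<tau>) (XV i)"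
  proof (cases "i \<in> {1..n}")
    case True
    then have g: "vars (g (Var (XV i))) \<subseteq> Xs n" using assms(1) unfolding admissible_def BF_def by auto
    have "eval (g (Var (XV i))) (xasg \<tau>) = eval (g (Var (XV i))) (ext k t \<tau>)"
      apply (rule eval_cong) using g by (auto simp: Xs_def xasg_def ext_def)
    moreover have "XV i \<in> Vs n k" using True by (auto simp: Vs_def Xs_def)
    ultimately show ?thesis using True by (simp add: act_asgX_def act_asg_def)
  next
    case False
    then have "XV i \<notin> Vs n k" by (auto simp: Vs_def Xs_def Ys_def)
    then show ?thesis using False by (auto simp add: act_asgX_def act_asg_def)
  qed
qed

lemma L2:
  assumes "admissible n k D g1" "admissible n k D g2" "\<rho> \<in> assignV (Vs n k)"
  shows "act_asg (Vs n k) (compose (BF (Vs n k)) g1 g2) \<rho> = act_asg (Vs n k) g2 (act_asg (Vs n k) g1 \<rho>)"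
proof
  fix v
  show "act_asg (Vs n k) (compose (BF (Vs n k)) g1 g2) \<rho> v = act_asg (Vs n k) g2 (act_asg (Vs n k) g1 \<rho>) v"
  proof (cases "v \<in> Vs n k")
    case True
    then have V: "Var v \<in> BF (Vs n k)" by (simp add: BF_def)
    then have "g2 (Var v) \<in> BF (Vs n k)" using assms(2) unfolding admissible_def bij_betw_def by auto
    then have "eval (g1 (g2 (Var v))) \<rho> = eval (g2 (Var v)) (act_asg (Vs n k) g1 \<rho>)"
      using assms(1,3) unfolding admissible_def by blast
    then show ?thesis using True V by (simp add: act_asg_def compose_def)
  next
    case False
    then show ?thesis by (simp add: act_asg_def)
  qed
qed

definition Rel :: "nat \<Rightarrow> nat \<Rightarrow> (form \<Rightarrow> form) set \<Rightarrow> (nat \<Rightarrow> (nat \<Rightarrow> bool) \<Rightarrow> bool) \<Rightarrow> (nat \<Rightarrow> (nat \<Rightarrow> bool) \<Rightarrow> bool) \<Rightarrow> bool" where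
  "Rel n k G t u \<longleftrightarrow> (\<forall>\<tau>\<in>assignX n. \<exists>g\<in>G. ext k u (act_asgX n g \<tau>) = act_asg (Vs n k) g (ext k t \<tau>))"

lemma one_in:
  assumes "admissible_group n k D G" shows "(\<lambda>x\<in>BF (Vs n k). x) \<in> G"
proof -
  have "subgroup G (BijGroup (BF (Vs n k)))" using assms by (simp add: admissible_group_def)
  then have "\<one>\<^bsub>BijGroup (BF (Vs n k))\<^esub> \<in> G" by (rule subgroup.one_closed)
  then show ?thesis by (simp add: BijGroup_def)
qed

lemma id_act:
  assumes "\<tau> \<in> assignX n" "\<rho> \<in> assignV (Vs n k)"
  shows "act_asgX n (\<lambda>x\<in>BF (Vs n k). x) \<tau> = \<tau>" "act_asg (Vs n k) (\<lambda>x\<in>BF (Vs n k). x) \<rho> = \<rho>"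
proof -
  show "act_asgX n (\<lambda>x\<in>BF (Vs n k). x) \<tau> = \<tau>"
  proof
    fix i show "act_asgX n (\<lambda>x\<in>BF (Vs n k). x) \<tau> i = \<tau> i"
      using assms(1) by (auto simp: act_asgX_def assignX_def BF_def Vs_def Xs_def xasg_def)
  qed
  show "act_asg (Vs n k) (\<lambda>x\<in>BF (Vs n k). x) \<rho> = \<rho>"
  proof
    fix v show "act_asg (Vs n k) (\<lambda>x\<in>BF (Vs n k). x) \<rho> v = \<rho> v"
      using assms(2) by (auto simp: act_asg_def assignV_def BF_def)
  qed
qed

lemma Rel_refl:
  assumes "admissible_group n k D G" shows "Rel n k G t t"
  unfolding Rel_def
proof
  fix \<tau> assume t: "\<tau> \<in> assignX n"
  show "\<exists>g\<in>G. ext k t (act_asgX n g \<tau>) = act_asg (Vs n k) g (ext k t \<tau>)"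
    apply (rule bexI[OF _ one_in[OF assms]])
    using id_act[OF t ext_in_assignV[OF t]] by simp
qed

lemma Rel_trans:
  assumes G: "admissible_group n k D G" and "Rel n k G t u" "Rel n k G u w"
  shows "Rel n k G t w"
  unfolding Rel_def
proof
  fix \<tau> assume t: "\<tau> \<in> assignX n"
  obtain g1 where g1: "g1 \<in> G" "ext k u (act_asgX n g1 \<tau>) = act_asg (Vs n k) g1 (ext k t \<tau>)"
    using assms(2) t unfolding Rel_def by blast
  define \<tau>1 where "\<tau>1 = act_asgX n g1 \<tau>"
  have t1: "\<tau>1 \<in> assignX n" by (simp add: \<tau>1_def act_asgX_in)
  obtain g2 where g2: "g2 \<in> G" "ext k w (act_asgX n g2 \<tau>1) = act_asg (Vs n k) g2 (ext k u \<tau>1)"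
    using assms(3) t1 unfolding Rel_def by blast
  have sg: "subgroup G (BijGroup (BF (Vs n k)))" using G by (simp add: admissible_group_def)
  have "g1 \<otimes>\<^bsub>BijGroup (BF (Vs n k))\<^esub> g2 \<in> G" using sg g1(1) g2(1) by (rule subgroup.m_closed)
  moreover have "g1 \<in> Bij (BF (Vs n k))" "g2 \<in> Bij (BF (Vs n k))"
    using sg g1(1) g2(1) subgroup.mem_carrier by (fastforce simp: BijGroup_def)+
  ultimately have c: "compose (BF (Vs n k)) g1 g2 \<in> G" by (simp add: BijGroup_def)
  have a1: "admissible n k D g1" "admissible n k D g2" using G g1(1) g2(1) by (auto simp: admissible_group_def)
  have ac: "admissible n k D (compose (BF (Vs n k)) g1 g2)" using G c by (auto simp: admissible_group_def)
  have e: "act_asg (Vs n k) (compose (BF (Vs n k)) g1 g2) (ext k t \<tau>) = act_asg (Vs n k) g2 (ext k u \<tau>1)"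
    using L2[OF a1 ext_in_assignV[OF t]] g1(2) by (simp add: \<tau>1_def)
  have "act_asgX n (compose (BF (Vs n k)) g1 g2) \<tau> = act_asgX n g2 \<tau>1"
    using L1[OF ac t, of t] L1[OF a1(2) t1, of u] e by simp
  then show "\<exists>g\<in>G. ext k w (act_asgX n g \<tau>) = act_asg (Vs n k) g (ext k t \<tau>)"
    using c e g2(2) by metis
qed

lemma finite_assignX: "finite (assignX n)"
proof -
  have "assignX n \<subseteq> (\<lambda>A i. i \<in> A) ` Pow {1..n}"
  proof
    fix \<tau> assume a: "\<tau> \<in> assignX n"
    have "\<tau> = (\<lambda>i. i \<in> {i. \<tau> i})" by auto
    moreover have "{i. \<tau> i} \<in> Pow {1..n}" using a by (auto simp: assignX_def)
    ultimately show "\<tau> \<in> (\<lambda>A i. i \<in> A) ` Pow {1..n}" by blast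
  qed
  then show ?thesis by (rule finite_subset) simp
qed

lemma finite_interps:
  assumes "prefix n k D" shows "finite (interps k D)"
proof -
  let ?r = "\<lambda>s. \<lambda>j\<in>{1..k}. \<lambda>\<tau>\<in>assignX n. s j \<tau>"
  have inj: "inj_on ?r (interps k D)"
  proof (rule inj_onI)
    fix s t assume s: "s \<in> interps k D" and t: "t \<in> interps k D" and eq: "?r s = ?r t"
    show "s = t"
    proof (rule ext, rule ext)
      fix j \<tau>
      show "s j \<tau> = t j \<tau>"
      proof (cases "j \<in> {1..k}")
        case True
        define \<tau>0 where "\<tau>0 = (\<lambda>i. i \<in> {1..n} \<and> \<tau> i)"
        have t0: "\<tau>0 \<in> assignX n" by (auto simp: \<tau>0_def assignX_def)
        have ag: "agree (D j) \<tau> \<tau>0" using assms True unfolding agree_def prefix_def \<tau>0_def by blast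
        have "s j \<tau> = s j \<tau>0" using s True ag by (auto simp: interps_def)
        also have "\<dots> = t j \<tau>0" using fun_cong[OF fun_cong[OF eq, of j], of \<tau>0] True t0 by simp
        also have "\<dots> = t j \<tau>" using t True ag by (auto simp: interps_def)
        finally show ?thesis .
      next
        case False
        then show ?thesis using s t by (auto simp: interps_def)
      qed
    qed
  qed
  have "?r ` interps k D \<subseteq> PiE {1..k} (\<lambda>_. PiE (assignX n) (\<lambda>_. UNIV))" by auto
  moreover have "finite (PiE {1..k} (\<lambda>_. PiE (assignX n) (\<lambda>_. (UNIV::bool set))))"
    by (intro finite_PiE finite_assignX) auto
  ultimately have "finite (?r ` interps k D)" by (rule finite_subset)
  then show ?thesis using inj by (rule finite_imageD)
qed

lemma orbit_return:
  assumes "finite S" "bij_betw f S S" "x \<in> S"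
  shows "\<exists>m>0. (f ^^ m) x = x"
proof -
  have inS: "(f ^^ m) x \<in> S" for m using bij_betw_funpow[OF assms(2), of m] assms(3)
    by (auto simp: bij_betw_def)
  have "\<not> inj (\<lambda>m. (f ^^ m) x)"
  proof
    assume "inj (\<lambda>m. (f ^^ m) x)"
    moreover have "range (\<lambda>m. (f ^^ m) x) \<subseteq> S" using inS by auto
    ultimately have "finite (UNIV :: nat set)"
      using assms(1) by (meson finite_imageD finite_subset)
    then show False by simp
  qed
  then obtain a b where ab: "a \<noteq> b" "(f ^^ a) x = (f ^^ b) x" unfolding inj_def by blast
  have main: "(f ^^ (d - c)) x = x" if "c < d" "(f ^^ c) x = (f ^^ d) x" for c d
  proof -
    have "(f ^^ d) x = (f ^^ c) ((f ^^ (d - c)) x)"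
      using that(1) funpow_add[of c "d - c" f] by simp
    moreover have "inj_on (f ^^ c) S" using bij_betw_funpow[OF assms(2), of c] by (simp add: bij_betw_def)
    ultimately show ?thesis using that(2) inS assms(3) by (metis inj_onD)
  qed
  show ?thesis
  proof (cases "a < b")
    case True then show ?thesis using main ab by (metis zero_less_diff)
  next
    case False then have "b < a" using ab by simp
    then show ?thesis using main ab by (metis zero_less_diff)
  qed
qed

lemma Rel_back:
  assumes G: "admissible_group n k D G" and P: "prefix n k D" and f: "f \<in> assoc_group n k D G"
    and s: "s \<in> interps k D"
  shows "Rel n k G (f s) s"
proof -
  have bij: "bij_betw f (interps k D) (interps k D)" using f by (simp add: assoc_group_def Bij_def)
  have R: "Rel n k G t (f t)" if "t \<in> interps k D" for t
    using f that unfolding assoc_group_def Rel_def by blast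
  have inS: "(f ^^ m) s \<in> interps k D" for m using bij_betw_funpow[OF bij, of m] s
    by (auto simp: bij_betw_def)
  have step: "Rel n k G (f s) ((f ^^ Suc d) s)" for d
  proof (induction d)
    case 0 then show ?case using Rel_refl[OF G] by simp
  next
    case (Suc d)
    have "Rel n k G ((f ^^ Suc d) s) (f ((f ^^ Suc d) s))" using R inS by blast
    then show ?case using Rel_trans[OF G Suc] by simp
  qed
  obtain m where m: "m > 0" "(f ^^ m) s = s" using orbit_return[OF finite_interps[OF P] bij s] by blast
  then obtain d where "m = Suc d" using gr0_implies_Suc by blast
  then show ?thesis using step[of d] m by simp
qed

lemma ext_YV: "j \<in> {1..k} \<Longrightarrow> ext k t \<tau> (YV j) = t j \<tau>"
  by (simp add: ext_def)

theorem lemma6: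
  fixes n k :: nat and D :: "nat \<Rightarrow> nat set"
    and G :: "(form \<Rightarrow> form) set"
    and \<sigma> :: "nat \<Rightarrow> bool"
    and f :: "(nat \<Rightarrow> (nat \<Rightarrow> bool) \<Rightarrow> bool) \<Rightarrow> (nat \<Rightarrow> (nat \<Rightarrow> bool) \<Rightarrow> bool)"
    and s :: "nat \<Rightarrow> (nat \<Rightarrow> bool) \<Rightarrow> bool"
    and i :: nat
  assumes "prefix n k D"
    and "admissible_group n k D G"
    and "\<sigma> \<in> assignX n"
    and "f \<in> assoc_group n k D G"
    and "s \<in> interps k D"
    and "i \<in> {1..k}"
    and h1: "\<forall>j\<in>{1..k}. (j < i \<or> \<not> D i \<subseteq> D j) \<longrightarrow>
              (\<forall>\<tau>\<in>assignX n. agree (D i) \<tau> \<sigma> \<longrightarrow> ext k s \<tau> (YV j) = ext k (f s) \<tau> (YV j))"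
    and h2: "\<forall>g\<in>G. \<forall>\<tau>\<in>assignX n. agree (D i) \<tau> \<sigma> \<longrightarrow> agree (D i) (act_asgX n g \<tau>) \<tau>"
  shows "\<exists>s'\<in>interps k D.
           (\<forall>j\<in>{1..k}. \<forall>\<tau>\<in>assignX n.
              ((j < i \<or> (j \<ge> i \<and> \<not> agree (D i) \<tau> \<sigma>)) \<longrightarrow> ext k s' \<tau> (YV j) = ext k s \<tau> (YV j))
            \<and> ((j \<ge> i \<and> agree (D i) \<tau> \<sigma>) \<longrightarrow> ext k s' \<tau> (YV j) = ext k (f s) \<tau> (YV j)))
         \<and> (\<exists>h\<in>assoc_group n k D G. h s = s')"
proof -
  note P = assms(1) and G = assms(2) and f = assms(4) and s = assms(5)
  define s' where "s' = (\<lambda>j \<tau>. if j \<in> {1..k} \<and> i \<le> j \<and> D i \<subseteq> D j \<and> agree (D i) \<tau> \<sigma> then f s j \<tau> else s j \<tau>)"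
  have fs: "f s \<in> interps k D" using f s by (auto simp: assoc_group_def Bij_def bij_betw_def)
  have s'I: "s' \<in> interps k D"
    unfolding interps_def
  proof (intro CollectI allI conjI impI)
    fix j a b assume j: "j \<in> {1..k}" and ab: "agree (D j) a b"
    have ss: "s j a = s j b" using s j ab by (auto simp: interps_def)
    have fss: "f s j a = f s j b" using fs j ab by (auto simp: interps_def)
    show "s' j a = s' j b"
    proof (cases "i \<le> j \<and> D i \<subseteq> D j")
      case True
      then have "agree (D i) a \<sigma> = agree (D i) b \<sigma>" using ab unfolding agree_def by auto
      then show ?thesis using ss fss by (simp add: s'_def)
    next
      case False then show ?thesis using ss by (auto simp add: s'_def)
    qed
  next
    fix j :: nat assume "j \<notin> {1..k}"
    then show "s' j = (\<lambda>_. False)" using s by (auto simp: s'_def interps_def)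
  qed
  have agreeE: "ext k s' \<tau> = ext k (f s) \<tau>" if t: "\<tau> \<in> assignX n" and a: "agree (D i) \<tau> \<sigma>" for \<tau>
  proof
    fix v show "ext k s' \<tau> v = ext k (f s) \<tau> v"
    proof (cases v)
      case (XV x) then show ?thesis by (simp add: ext_def)
    next
      case (YV j)
      show ?thesis
      proof (cases "j \<in> {1..k}")
        case True
        show ?thesis
        proof (cases "i \<le> j \<and> D i \<subseteq> D j")
          case c: True then show ?thesis using True a YV by (simp add: ext_def s'_def)
        next
          case c: False
          then have "j < i \<or> \<not> D i \<subseteq> D j" by auto
          then have "ext k s \<tau> (YV j) = ext k (f s) \<tau> (YV j)" using h1 True t a by blast
          then show ?thesis using True c YV by (simp add: ext_def s'_def)
        qed
      next
        case False then show ?thesis using YV by (auto simp add: ext_def)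
      qed
    qed
  qed
  have nagreeE: "ext k s' \<tau> = ext k s \<tau>" if a: "\<not> agree (D i) \<tau> \<sigma>" for \<tau>
  proof
    fix v show "ext k s' \<tau> v = ext k s \<tau> v"
      using a by (cases v) (auto simp: ext_def s'_def)
  qed
  have one: "(\<lambda>x\<in>BF (Vs n k). x) \<in> G" by (rule one_in[OF G])
  have idE: "ext k t (act_asgX n (\<lambda>x\<in>BF (Vs n k). x) \<tau>) = act_asg (Vs n k) (\<lambda>x\<in>BF (Vs n k). x) (ext k t \<tau>)"
    if "\<tau> \<in> assignX n" for \<tau> t
    using id_act[OF that ext_in_assignV[OF that]] by simp
  have R1: "Rel n k G s s'"
    unfolding Rel_def
  proof
    fix \<tau> assume t: "\<tau> \<in> assignX n"
    show "\<exists>g\<in>G. ext k s' (act_asgX n g \<tau>) = act_asg (Vs n k) g (ext k s \<tau>)"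
    proof (cases "agree (D i) \<tau> \<sigma>")
      case True
      obtain g where g: "g \<in> G" "ext k (f s) (act_asgX n g \<tau>) = act_asg (Vs n k) g (ext k s \<tau>)"
        using f s t unfolding assoc_group_def by blast
      have "agree (D i) (act_asgX n g \<tau>) \<tau>" using h2 g(1) t True by blast
      then have "agree (D i) (act_asgX n g \<tau>) \<sigma>" using True by (simp add: agree_def)
      then have "ext k s' (act_asgX n g \<tau>) = ext k (f s) (act_asgX n g \<tau>)"
        using agreeE act_asgX_in by blast
      then show ?thesis using g by metis
    next
      case False
      then show ?thesis using one idE[OF t, of s] nagreeE[OF False] id_act(1)[OF t ext_in_assignV[OF t, of k s]] by metis
    qed
  qed
  have R2: "Rel n k G s' s"
    unfolding Rel_def
  proof
    fix \<tau> assume t: "\<tau> \<in> assignX n"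
    show "\<exists>g\<in>G. ext k s (act_asgX n g \<tau>) = act_asg (Vs n k) g (ext k s' \<tau>)"
    proof (cases "agree (D i) \<tau> \<sigma>")
      case True
      then show ?thesis using Rel_back[OF G P f s] t agreeE[OF t True] unfolding Rel_def by metis
    next
      case False
      then show ?thesis using one idE[OF t, of s] nagreeE[OF False] id_act(1)[OF t ext_in_assignV[OF t, of k s]] by metis
    qed
  qed
  define h where "h = (\<lambda>t\<in>interps k D. if t = s then s' else if t = s' then s else t)"
  have hS: "h ` interps k D \<subseteq> interps k D" using s s'I by (auto simp: h_def)
  have hh: "\<forall>t\<in>interps k D. h (h t) = t" using s s'I by (auto simp: h_def)
  have "bij_betw h (interps k D) (interps k D)"
    by (rule bij_betw_byWitness[OF hh hh hS hS])
  then have hB: "h \<in> Bij (interps k D)" by (simp add: Bij_def h_def)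
  have hR: "Rel n k G t (h t)" if "t \<in> interps k D" for t
  proof -
    consider "t = s" | "t \<noteq> s" "t = s'" | "t \<noteq> s" "t \<noteq> s'" by blast
    then show ?thesis
    proof cases
      case 1 then show ?thesis using R1 that by (simp add: h_def)
    next
      case 2 then show ?thesis using R2 that by (simp add: h_def)
    next
      case 3 then show ?thesis using Rel_refl[OF G] that by (simp add: h_def)
    qed
  qed
  have hA: "h \<in> assoc_group n k D G"
    unfolding assoc_group_def using hB hR unfolding Rel_def by blast
  have hs: "h s = s'" using s by (simp add: h_def)
  show ?thesis
  proof (rule bexI[OF _ s'I], intro conjI ballI)
    fix j \<tau> assume j: "j \<in> {1..k}" and t: "\<tau> \<in> assignX n"
    show "(j < i \<or> (j \<ge> i \<and> \<not> agree (D i) \<tau> \<sigma>)) \<longrightarrow> ext k s' \<tau> (YV j) = ext k s \<tau> (YV j)"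
      using j nagreeE by (auto simp: ext_def s'_def)
    show "(j \<ge> i \<and> agree (D i) \<tau> \<sigma>) \<longrightarrow> ext k s' \<tau> (YV j) = ext k (f s) \<tau> (YV j)"
      using agreeE[OF t] by auto
  next
    show "\<exists>h\<in>assoc_group n k D G. h s = s'" using hA hs by blast
  qed
qed

end
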